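(* Let $d\ge 2$ be an integer, and let $(B_\ell)$, $(C_\ell)$, $(D_\ell)$, indexed by even integers $\ell\ge 6$, satisfy for every even $\ell\ge 8$ \begin{align*} B_\ell &= (d-1)D_{\ell-2}+d\,C_{\ell-2},\\ C_\ell &= (d-1)D_{\ell-2}+d\,B_{\ell-2},\\ D_\ell &= (d^2-3d+3)D_{\ell-2}+(d-1)^2C_{\ell-2}+(d-1)^2B_{\ell-2}, \end{align*} with initial values $B_6=(d+1)d(d-1)^3$, $C_6=(d+1)d(d^3-2d^2+3d-1)$, $D_6=(d+1)d(d-1)^2(d^2-2d+3)$. Then for every even $\ell\ge 6$, \begin{align*} B_\ell &= d(d^2-d+1)^{\ell/2-1}+\tfrac12(-1)^{\ell/2-1}d(d-1)(d-2)^{\ell/2-1}+\tfrac12(-1)^{\ell/2}(d+1)d^{\ell/2},\\ C_\ell &= \tfrac12(-1)^{\ell/2-1}(d-1)d(d-2)^{\ell/2-1}+d(d^2-d+1)^{\ell/2-1}-\tfrac12(-1)^{\ell/2}d^{\ell/2}(d+1),\\ D_\ell &= (d-1)d\left((d^2-d+1)^{\ell/2-1}-(-1)^{\ell/2-1}(d-2)^{\ell/2-1}\right). \end{align*} *)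

theory Defs
  imports Complex_Main
begin

end

theory Submission
  imports Defs
begin

theorem lemma10:
  fixes d :: int and B C D :: "nat \<Rightarrow> real"
  assumes hd: "d \<ge> 2"
    and recB: "\<And>l. even l \<Longrightarrow> l \<ge> 8 \<Longrightarrow>
        B l = (of_int d - 1) * D (l - 2) + of_int d * C (l - 2)"
    and recC: "\<And>l. even l \<Longrightarrow> l \<ge> 8 \<Longrightarrow>
        C l = (of_int d - 1) * D (l - 2) + of_int d * B (l - 2)"
    and recD: "\<And>l. even l \<Longrightarrow> l \<ge> 8 \<Longrightarrow>
        D l = (of_int d ^ 2 - 3 * of_int d + 3) * D (l - 2)
              + (of_int d - 1) ^ 2 * C (l - 2) + (of_int d - 1) ^ 2 * B (l - 2)"
    and B6: "B 6 = (of_int d + 1) * of_int d * (of_int d - 1) ^ 3"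
    and C6: "C 6 = (of_int d + 1) * of_int d * (of_int d ^ 3 - 2 * of_int d ^ 2 + 3 * of_int d - 1)"
    and D6: "D 6 = (of_int d + 1) * of_int d * (of_int d - 1) ^ 2 * (of_int d ^ 2 - 2 * of_int d + 3)"
  shows "\<forall>l. even l \<and> l \<ge> 6 \<longrightarrow>
      B l = of_int d * (of_int d ^ 2 - of_int d + 1) ^ (l div 2 - 1)
            + 1/2 * (-1) ^ (l div 2 - 1) * of_int d * (of_int d - 1) * (of_int d - 2) ^ (l div 2 - 1)
            + 1/2 * (-1) ^ (l div 2) * (of_int d + 1) * of_int d ^ (l div 2)
    \<and> C l = 1/2 * (-1) ^ (l div 2 - 1) * (of_int d - 1) * of_int d * (of_int d - 2) ^ (l div 2 - 1)
            + of_int d * (of_int d ^ 2 - of_int d + 1) ^ (l div 2 - 1)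
            - 1/2 * (-1) ^ (l div 2) * of_int d ^ (l div 2) * (of_int d + 1)
    \<and> D l = (of_int d - 1) * of_int d * ((of_int d ^ 2 - of_int d + 1) ^ (l div 2 - 1)
            - (-1) ^ (l div 2 - 1) * (of_int d - 2) ^ (l div 2 - 1))"
proof -
  define x where "x = (of_int d :: real)"
  have main: "B (2*n+2) = x * (x^2-x+1)^n + 1/2 * (-1)^n * x * (x-1) * (x-2)^n
            + 1/2 * (-1)^(Suc n) * (x+1) * x^(Suc n)
     \<and> C (2*n+2) = 1/2 * (-1)^n * (x-1) * x * (x-2)^n + x * (x^2-x+1)^n
            - 1/2 * (-1)^(Suc n) * x^(Suc n) * (x+1)
     \<and> D (2*n+2) = (x-1) * x * ((x^2-x+1)^n - (-1)^n * (x-2)^n)" if "n \<ge> 2" for n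
    using that
  proof (induction n rule: nat_induct_at_least)
    case base
    have "2*2+2 = (6::nat)" by simp
    then show ?case using B6 C6 D6 unfolding x_def[symmetric]
      by (simp add: field_simps power2_eq_square power3_eq_cube eval_nat_numeral)
  next
    case (Suc n)
    have e: "2 * Suc n + 2 - 2 = 2*n+2" by simp
    have ev: "even (2 * Suc n + 2)" "2 * Suc n + 2 \<ge> 8" using Suc by auto
    note IH = Suc.IH
    show ?case
      unfolding recB[OF ev] recC[OF ev] recD[OF ev] e x_def[symmetric]
      unfolding IH[THEN conjunct1] IH[THEN conjunct2, THEN conjunct1] IH[THEN conjunct2, THEN conjunct2]
      unfolding power_Suc
      by (simp add: field_simps power2_eq_square)
  qed
  show ?thesis
    apply (intro allI impI)
    subgoal for l
  proof -
    assume l: "even l \<and> l \<ge> 6"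
    then obtain m where lm: "l = 2*m" by blast
    define n where "n = m - 1"
    have n2: "n \<ge> 2" and ln: "l = 2*n+2" using l lm n_def by auto
    have h: "l div 2 - 1 = n" "l div 2 = Suc n" using ln by auto
    show ?thesis using main[OF n2] unfolding h ln[symmetric] x_def by simp
  qed
  done
qed

end
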